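(* Let $k\ge2$ and $n\ge1$ be integers and let $G_{k,n}$ be the graph defined below. Then $G_{k,n}$ is type 2 (it has no $(k+1)$-total colouring), and $$k+1<\chi''_c(G_{k,n})\le k+1+\frac1n.$$
   Context: A half-edge has exactly one end vertex. Let $H_k$ be obtained from $K_{k,k}$ by deleting one vertex but keeping its $k$ incident edges as half-edges, and let $H'_k$ be obtained from $H_k$ by deleting $k-2$ of its half-edges (so $H'_k$ has exactly two half-edges, at distinct vertices). Let $B_1,\ldots,B_n$ be copies of $H'_k$, with the two half-edges of $B_i$ named $f_i$ and $f'_i$. Let $B_0$ be a single vertex $u$ with two half-edges $f_0$ and $f'_{n+1}$. The graph $G_{k,n}$ is obtained from the disjoint union of $B_0,B_1,\ldots,B_n$ by joining, for each $0\le i\le n$, the half-edges $f_i$ and $f'_{i+1}$ into an edge $e_i$ between their end vertices. It is a finite graph of maximum degree $k$. A $(k+1)$-total colouring assigns to vertices and edges one of $k+1$ colours so that adjacent vertices, edges sharing an end vertex, and incident vertex–edge pairs get different colours. For integers $p\ge q\ge1$, a $(p,q)$-total colouring assigns colours in $\{0,\ldots,p-1\}$ to vertices and edges such that $q\le|c(a)-c(b)|\le p-q$ for every such adjacent/incident pair $a,b$; $\chi''_c(G)=\inf\{p/q \mid G \text{ has a } (p,q)\text{-total colouring}\}$. *)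

theory Defs
  imports Complex_Main
begin

text \<open>A simple graph is given by a vertex set V and a set E of edges, each edge
being a 2-element set of vertices.\<close>

definition conflict :: "'v set \<Rightarrow> 'v set set \<Rightarrow> ('v + 'v set) \<Rightarrow> ('v + 'v set) \<Rightarrow> bool" where
  "conflict V E x y \<longleftrightarrow>
     (case (x, y) of
        (Inl u, Inl v) \<Rightarrow> u \<in> V \<and> v \<in> V \<and> {u, v} \<in> E
      | (Inr e, Inr f) \<Rightarrow> e \<in> E \<and> f \<in> E \<and> e \<noteq> f \<and> e \<inter> f \<noteq> {}
      | (Inl v, Inr e) \<Rightarrow> v \<in> V \<and> e \<in> E \<and> v \<in> e
      | (Inr e, Inl v) \<Rightarrow> v \<in> V \<and> e \<in> E \<and> v \<in> e)"

definition elements :: "'v set \<Rightarrow> 'v set set \<Rightarrow> ('v + 'v set) set" where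
  "elements V E = Inl ` V \<union> Inr ` E"

definition total_colouring :: "'v set \<Rightarrow> 'v set set \<Rightarrow> nat \<Rightarrow> ('v + 'v set \<Rightarrow> nat) \<Rightarrow> bool" where
  "total_colouring V E m c \<longleftrightarrow>
     (\<forall>x \<in> elements V E. c x < m) \<and>
     (\<forall>x \<in> elements V E. \<forall>y \<in> elements V E. conflict V E x y \<longrightarrow> c x \<noteq> c y)"

definition pq_total_colouring :: "'v set \<Rightarrow> 'v set set \<Rightarrow> nat \<Rightarrow> nat \<Rightarrow> ('v + 'v set \<Rightarrow> nat) \<Rightarrow> bool" where
  "pq_total_colouring V E p q c \<longleftrightarrow>
     (\<forall>x \<in> elements V E. c x < p) \<and>
     (\<forall>x \<in> elements V E. \<forall>y \<in> elements V E. conflict V E x y \<longrightarrow>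
        q \<le> \<bar>int (c x) - int (c y)\<bar> \<and> \<bar>int (c x) - int (c y)\<bar> \<le> int p - int q)"

definition circ_total_chromatic :: "'v set \<Rightarrow> 'v set set \<Rightarrow> real" where
  "circ_total_chromatic V E =
     Inf {real p / real q | p q. 1 \<le> q \<and> q \<le> p \<and> (\<exists>c. pq_total_colouring V E p q c)}"

text \<open>The vertex u of B_0 is (0,0). For 1 \<le> i \<le> n the
block B_i (a copy of H'_k) has vertices (i, j): j < k are the vertices a_1..a_k of the
side of K_{k,k} that kept its full size, and j = k + l with l < k - 1 are the remaining
vertices b_1..b_{k-1} of the other side (b_k was deleted). The half-edges kept in H'_k
are at a_1 = (i,0) (named f_i) and a_2 = (i,1) (named f'_i).\<close>

definition Gkn_V :: "nat \<Rightarrow> nat \<Rightarrow> (nat \<times> nat) set" where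
  "Gkn_V k n = {(0,0)} \<union> {(i, j) | i j. 1 \<le> i \<and> i \<le> n \<and> j < 2 * k - 1}"

definition end_f :: "nat \<Rightarrow> nat \<times> nat" where
  "end_f i = (if i = 0 then (0,0) else (i, 0))"

definition end_f' :: "nat \<Rightarrow> nat \<Rightarrow> nat \<times> nat" where
  "end_f' n i = (if i = n + 1 then (0,0) else (i, 1))"

definition Gkn_E :: "nat \<Rightarrow> nat \<Rightarrow> (nat \<times> nat) set set" where
  "Gkn_E k n =
     {{(i, j), (i, k + l)} | i j l. 1 \<le> i \<and> i \<le> n \<and> j < k \<and> l < k - 1}
     \<union> {{end_f i, end_f' n (i + 1)} | i. i \<le> n}"

end

theory Submission
  imports Defs
begin

lemma block_comb:
  fixes k :: nat and ca cb :: "nat \<Rightarrow> nat" and ce :: "nat \<Rightarrow> nat \<Rightarrow> nat"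
  assumes k2: "k \<ge> 2"
    and ca_lt: "\<And>j. j < k \<Longrightarrow> ca j < k+1"
    and cb_lt: "\<And>l. l < k-1 \<Longrightarrow> cb l < k+1"
    and ce_lt: "\<And>j l. j < k \<Longrightarrow> l < k-1 \<Longrightarrow> ce j l < k+1"
    and C1: "\<And>j l. j < k \<Longrightarrow> l < k-1 \<Longrightarrow> ca j \<noteq> cb l"
    and C2a: "\<And>j l. j < k \<Longrightarrow> l < k-1 \<Longrightarrow> ca j \<noteq> ce j l"
    and C2b: "\<And>j l. j < k \<Longrightarrow> l < k-1 \<Longrightarrow> cb l \<noteq> ce j l"
    and C3a: "\<And>j l l'. j < k \<Longrightarrow> l < k-1 \<Longrightarrow> l' < k-1 \<Longrightarrow> l \<noteq> l' \<Longrightarrow> ce j l \<noteq> ce j l'"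
    and C3b: "\<And>j j' l. j < k \<Longrightarrow> j' < k \<Longrightarrow> l < k-1 \<Longrightarrow> j \<noteq> j' \<Longrightarrow> ce j l \<noteq> ce j' l"
    and jz: "jz < k" and hlt: "h < k+1"
    and H1: "ca jz \<noteq> h" and H2: "\<And>l. l < k-1 \<Longrightarrow> ce jz l \<noteq> h"
  shows "h = cb 0"
proof -
  have S: "\<exists>j<k. ce j l = \<alpha>" if l: "l < k-1" and a: "\<alpha> < k+1" and ne: "cb l \<noteq> \<alpha>" for l \<alpha>
  proof -
    define f where "f = (\<lambda>j. if j = k then cb l else ce j l)"
    have inj: "inj_on f {..<k+1}"
    proof (rule inj_onI)
      fix x y assume x: "x \<in> {..<k+1}" and y: "y \<in> {..<k+1}" and e: "f x = f y"
      show "x = y"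
      proof (cases "x = k")
        case True
        then show ?thesis using e y C2b[of y l] l by (auto simp: f_def split: if_splits)
      next
        case False
        then show ?thesis using e x y C2b[of x l] C3b[of x y l] l by (auto simp: f_def split: if_splits)
      qed
    qed
    have sub: "f ` {..<k+1} \<subseteq> {..<k+1}"
      unfolding f_def using cb_lt ce_lt l by (auto simp: less_Suc_eq)
    have "f ` {..<k+1} = {..<k+1}"
      by (rule endo_inj_surj[OF _ sub inj]) simp
    then obtain j where "j < k+1" "f j = \<alpha>" using a by (metis imageE lessThan_iff)
    then show ?thesis using ne unfolding f_def by (auto simp: less_Suc_eq split: if_splits)
  qed
  have match: "\<exists>g. inj_on g {..<k-1} \<and> (\<forall>l<k-1. g l < k \<and> ce (g l) l = \<alpha>)"
    if a: "\<alpha> < k+1" and nb: "\<And>l. l < k-1 \<Longrightarrow> cb l \<noteq> \<alpha>" for \<alpha>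
  proof -
    define g where "g = (\<lambda>l. SOME j. j < k \<and> ce j l = \<alpha>)"
    have g: "g l < k \<and> ce (g l) l = \<alpha>" if "l < k-1" for l
      unfolding g_def by (rule someI_ex) (use S[OF that a nb[OF that]] in blast)
    have "inj_on g {..<k-1}"
      unfolding inj_on_def using g C3a by (metis lessThan_iff)
    then show ?thesis using g by blast
  qed
  have D: "ca j \<noteq> ca j'" if jj: "j < k" "j' < k" "j \<noteq> j'" for j j'
  proof
    assume eq: "ca j = ca j'"
    obtain g where g: "inj_on g {..<k-1}" "\<forall>l<k-1. g l < k \<and> ce (g l) l = ca j"
    proof -
      have "\<And>l. l < k-1 \<Longrightarrow> cb l \<noteq> ca j" using C1 jj(1) by metis
      then show ?thesis using match[of "ca j"] ca_lt[OF jj(1)] that by blast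
    qed
    have "g ` {..<k-1} \<subseteq> {..<k} - {j, j'}"
      using g C2a eq jj by fastforce
    then have "card (g ` {..<k-1}) \<le> card ({..<k} - {j,j'})" by (intro card_mono) auto
    moreover have "card (g ` {..<k-1}) = k - 1" using card_image[OF g(1)] by simp
    moreover have "card ({..<k} - {j,j'}) = k - 2" using jj by (simp add: card_Diff_subset)
    ultimately show False using k2 by linarith
  qed
  show "h = cb 0"
  proof (rule ccontr)
    assume hne: "h \<noteq> cb 0"
    show False
    proof (cases "h \<in> ca ` {..<k}")
      case True
      then obtain j where j: "j < k" "ca j = h" by auto
      have "j \<noteq> jz" using H1 j by auto
      obtain g where g: "inj_on g {..<k-1}" "\<forall>l<k-1. g l < k \<and> ce (g l) l = h"
      proof -
        have "\<And>l. l < k-1 \<Longrightarrow> cb l \<noteq> h" using C1 j by metis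
        then show ?thesis using match[of h] hlt that by blast
      qed
      have sub: "g ` {..<k-1} \<subseteq> {..<k} - {j}"
        using g C2a j by fastforce
      have "card (g ` {..<k-1}) = k - 1" using card_image[OF g(1)] by simp
      moreover have "card ({..<k} - {j}) = k - 1" using j by simp
      ultimately have "g ` {..<k-1} = {..<k} - {j}"
        using sub by (metis card_subset_eq finite_Diff finite_lessThan)
      then obtain l where "l < k-1" "g l = jz" using jz \<open>j \<noteq> jz\<close>
        by (metis (no_types, lifting) Diff_iff empty_iff imageE insert_iff lessThan_iff)
      then show False using g H2 by metis
    next
      case False
      have injA: "inj_on ca {..<k}" using D unfolding inj_on_def by blast
      have b0: "cb 0 \<notin> ca ` {..<k}" using C1 k2 by fastforce
      have "insert h (insert (cb 0) (ca ` {..<k})) \<subseteq> {..<k+1}"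
        using ca_lt cb_lt hlt k2 by auto
      then have "card (insert h (insert (cb 0) (ca ` {..<k}))) \<le> k+1"
        by (metis card_lessThan card_mono finite_lessThan)
      moreover have "card (insert h (insert (cb 0) (ca ` {..<k}))) = k + 2"
        using False b0 hne card_image[OF injA] by simp
      ultimately show False by simp
    qed
  qed
qed


lemma elements_simps[simp]:
  "Inl v \<in> elements V E \<longleftrightarrow> v \<in> V" "Inr e \<in> elements V E \<longleftrightarrow> e \<in> E"
  by (auto simp: elements_def)

lemma conflict_simps[simp]:
  "conflict V E (Inl u) (Inl v) \<longleftrightarrow> u \<in> V \<and> v \<in> V \<and> {u, v} \<in> E"
  "conflict V E (Inr e) (Inr f) \<longleftrightarrow> e \<in> E \<and> f \<in> E \<and> e \<noteq> f \<and> e \<inter> f \<noteq> {}"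
  "conflict V E (Inl v) (Inr e) \<longleftrightarrow> v \<in> V \<and> e \<in> E \<and> v \<in> e"
  "conflict V E (Inr e) (Inl v) \<longleftrightarrow> v \<in> V \<and> e \<in> E \<and> v \<in> e"
  by (simp_all add: conflict_def)

lemma V_in: "1 \<le> i \<Longrightarrow> i \<le> n \<Longrightarrow> j < 2*k-1 \<Longrightarrow> (i,j) \<in> Gkn_V k n"
  by (auto simp: Gkn_V_def)
lemma V0_in: "(0,0) \<in> Gkn_V k n" by (simp add: Gkn_V_def)

lemma be_in: "1 \<le> i \<Longrightarrow> i \<le> n \<Longrightarrow> j < k \<Longrightarrow> l < k-1 \<Longrightarrow> {(i,j),(i,k+l)} \<in> Gkn_E k n"
  unfolding Gkn_E_def by blast
lemma ext_in: "i \<le> n \<Longrightarrow> {end_f i, end_f' n (i+1)} \<in> Gkn_E k n"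
  unfolding Gkn_E_def by blast

lemma tc_ne:
  assumes "total_colouring V E m c" "x \<in> elements V E" "y \<in> elements V E" "conflict V E x y"
  shows "c x \<noteq> c y"
  using assms unfolding total_colouring_def by blast

lemma tc_lt:
  assumes "total_colouring V E m c" "x \<in> elements V E"
  shows "c x < m"
  using assms unfolding total_colouring_def by blast

lemma block_step:
  assumes k2: "k \<ge> 2" and tc: "total_colouring (Gkn_V k n) (Gkn_E k n) (k+1) c"
    and i1: "1 \<le> i" and iN: "i \<le> n"
  shows "c (Inr {end_f i, end_f' n (i+1)}) = c (Inr {end_f (i-1), end_f' n i})"
proof -
  let ?V = "Gkn_V k n" and ?E = "Gkn_E k n"
  define ca where "ca j = c (Inl (i,j))" for j
  define cb where "cb l = c (Inl (i,k+l))" for l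
  define ce where "ce j l = c (Inr {(i,j),(i,k+l)})" for j l
  have vin: "(i,j) \<in> ?V" if "j < 2*k-1" for j using V_in i1 iN that by blast
  have bin: "{(i,j),(i,k+l)} \<in> ?E" if "j < k" "l < k-1" for j l using be_in i1 iN that by blast
  have ne: "c x \<noteq> c y" if "x \<in> elements ?V ?E" "y \<in> elements ?V ?E" "conflict ?V ?E x y" for x y
    using tc_ne[OF tc that] .
  have lt: "c x < k+1" if "x \<in> elements ?V ?E" for x using tc_lt[OF tc that] .
  have ca_lt: "\<And>j. j < k \<Longrightarrow> ca j < k+1" unfolding ca_def using lt vin by simp
  have cb_lt: "\<And>l. l < k-1 \<Longrightarrow> cb l < k+1" unfolding cb_def using lt vin by simp
  have ce_lt: "\<And>j l. j < k \<Longrightarrow> l < k-1 \<Longrightarrow> ce j l < k+1" unfolding ce_def using lt bin by simp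
  have C1: "\<And>j l. j < k \<Longrightarrow> l < k-1 \<Longrightarrow> ca j \<noteq> cb l"
    unfolding ca_def cb_def using ne vin bin by simp
  have C2a: "\<And>j l. j < k \<Longrightarrow> l < k-1 \<Longrightarrow> ca j \<noteq> ce j l"
    unfolding ca_def ce_def using ne vin bin by simp
  have C2b: "\<And>j l. j < k \<Longrightarrow> l < k-1 \<Longrightarrow> cb l \<noteq> ce j l"
    unfolding cb_def ce_def using ne vin bin by simp
  have C3a: "\<And>j l l'. j < k \<Longrightarrow> l < k-1 \<Longrightarrow> l' < k-1 \<Longrightarrow> l \<noteq> l' \<Longrightarrow> ce j l \<noteq> ce j l'"
  proof -
    fix j l l' assume a: "j < k" "l < k-1" "l' < k-1" "l \<noteq> l'"
    have "{(i,j),(i,k+l)} \<noteq> {(i,j),(i,k+l')}" using a by (auto simp: doubleton_eq_iff)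
    then show "ce j l \<noteq> ce j l'" unfolding ce_def using ne[of "Inr {(i,j),(i,k+l)}" "Inr {(i,j),(i,k+l')}"] bin a by auto
  qed
  have C3b: "\<And>j j' l. j < k \<Longrightarrow> j' < k \<Longrightarrow> l < k-1 \<Longrightarrow> j \<noteq> j' \<Longrightarrow> ce j l \<noteq> ce j' l"
  proof -
    fix j j' l assume a: "j < k" "j' < k" "l < k-1" "j \<noteq> j'"
    have "{(i,j),(i,k+l)} \<noteq> {(i,j'),(i,k+l)}" using a by (auto simp: doubleton_eq_iff)
    then show "ce j l \<noteq> ce j' l" unfolding ce_def using ne[of "Inr {(i,j),(i,k+l)}" "Inr {(i,j'),(i,k+l)}"] bin a by auto
  qed
  let ?e1 = "{end_f i, end_f' n (i+1)}" and ?e0 = "{end_f (i-1), end_f' n i}"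
  have e1in: "?e1 \<in> ?E" using ext_in iN by blast
  have e0in: "?e0 \<in> ?E" using ext_in[of "i-1" n k] iN i1 by simp
  have fi: "end_f i = (i,0)" using i1 by (simp add: end_f_def)
  have fi': "end_f' n i = (i,1)" using iN by (simp add: end_f'_def)
  have o1: "end_f' n (i+1) \<noteq> (i, k+l)" for l using k2 i1 by (auto simp: end_f'_def)
  have o0: "end_f (i-1) \<noteq> (i, k+l)" for l using k2 i1 by (auto simp: end_f_def)
  have "c (Inr ?e1) = cb 0"
  proof (rule block_comb[of k ca cb ce 0 "c (Inr ?e1)", OF k2 ca_lt cb_lt ce_lt C1 C2a C2b C3a C3b])
    show "0 < k" using k2 by simp
    show "c (Inr ?e1) < k+1" using lt e1in by simp
    show "ca 0 \<noteq> c (Inr ?e1)" unfolding ca_def using ne[of "Inl (i,0)" "Inr ?e1"] vin e1in fi k2 by auto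
    show "ce 0 l \<noteq> c (Inr ?e1)" if "l < k-1" for l
    proof -
      have "{(i,0),(i,k+l)} \<noteq> ?e1" using o1[of l] fi k2 by (auto simp: doubleton_eq_iff)
      then show ?thesis unfolding ce_def using ne[of "Inr {(i,0),(i,k+l)}" "Inr ?e1"] bin[of 0 l] that e1in fi k2 by auto
    qed
  qed
  moreover have "c (Inr ?e0) = cb 0"
  proof (rule block_comb[of k ca cb ce 1 "c (Inr ?e0)", OF k2 ca_lt cb_lt ce_lt C1 C2a C2b C3a C3b])
    show "1 < k" using k2 by simp
    show "c (Inr ?e0) < k+1" using lt e0in by simp
    show "ca 1 \<noteq> c (Inr ?e0)" unfolding ca_def using ne[of "Inl (i,1)" "Inr ?e0"] vin e0in fi' k2 by auto
    show "ce 1 l \<noteq> c (Inr ?e0)" if "l < k-1" for l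
    proof -
      have "{(i,1),(i,k+l)} \<noteq> ?e0" using o0[of l] fi' k2 by (auto simp: doubleton_eq_iff)
      then show ?thesis unfolding ce_def using ne[of "Inr {(i,1),(i,k+l)}" "Inr ?e0"] bin[of 1 l] that e0in fi' k2 by auto
    qed
  qed
  ultimately show ?thesis by simp
qed

theorem part1:
  assumes k2: "k \<ge> 2" and n1: "n \<ge> 1"
  shows "\<not> (\<exists>c. total_colouring (Gkn_V k n) (Gkn_E k n) (k + 1) c)"
proof
  assume "\<exists>c. total_colouring (Gkn_V k n) (Gkn_E k n) (k + 1) c"
  then obtain c where tc: "total_colouring (Gkn_V k n) (Gkn_E k n) (k + 1) c" by blast
  have eq: "c (Inr {end_f i, end_f' n (i+1)}) = c (Inr {end_f 0, end_f' n 1})" if "i \<le> n" for i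
    using that
  proof (induction i)
    case 0 then show ?case by simp
  next
    case (Suc i)
    then show ?case using block_step[OF k2 tc, of "Suc i"] by simp
  qed
  have a: "{end_f n, end_f' n (n+1)} = {(n,0),(0,0)}" using n1 by (simp add: end_f_def end_f'_def)
  have b: "{end_f 0, end_f' n 1} = {(0,0),(1,1)}" using n1 by (simp add: end_f_def end_f'_def)
  have ina: "{(n,0),(0,0)} \<in> Gkn_E k n" using ext_in[of n n k] a by simp
  have inb: "{(0,0),(1,1)} \<in> Gkn_E k n" using ext_in[of 0 n k] b by simp
  have "c (Inr {(n,0),(0,0)}) \<noteq> c (Inr {(0,0),(1,1)})"
    by (rule tc_ne[OF tc]) (use ina inb in \<open>auto simp: doubleton_eq_iff\<close>)
  then show False using eq[of n] a b by simp
qed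


lemma shift_exists:
  fixes c :: "'a \<Rightarrow> nat"
  assumes fin: "finite X" and m: "m \<le> p" and small: "card X * (p - m) < p"
  shows "\<exists>t<p. \<forall>x\<in>X. (c x + t) mod p < m"
proof -
  define T where "T x = {t. t < p \<and> m \<le> (c x + t) mod p}" for x
  have cardT: "card (T x) \<le> p - m" for x
  proof -
    have "T x \<subseteq> (\<lambda>v. (v + (p - c x mod p)) mod p) ` {m..<p}"
    proof
      fix t assume t: "t \<in> T x"
      then have tp: "t < p" and mm: "m \<le> (c x + t) mod p" by (auto simp: T_def)
      have pp: "0 < p" using tp by simp
      let ?v = "(c x + t) mod p"
      have "(?v + (p - c x mod p)) mod p = t"
      proof -
        have "(?v + (p - c x mod p)) mod p = ((c x + t) + (p - c x mod p)) mod p"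
          by (simp add: mod_add_left_eq)
        also have "(c x + t) + (p - c x mod p) = t + p + (c x - c x mod p)"
          using pp mod_less_divisor[OF pp, of "c x"] mod_less_eq_dividend[of "c x" p] by linarith
        also have "c x - c x mod p = p * (c x div p)" by (simp add: minus_mod_eq_mult_div)
        also have "(t + p + p * (c x div p)) mod p = t" using tp by simp
        finally show ?thesis .
      qed
      moreover have "?v \<in> {m..<p}" using mm pp by simp
      ultimately show "t \<in> (\<lambda>v. (v + (p - c x mod p)) mod p) ` {m..<p}" by (metis imageI)
    qed
    then have "card (T x) \<le> card {m..<p}" by (rule surj_card_le[OF finite_atLeastLessThan])
    then show ?thesis by simp
  qed
  have "card (\<Union>x\<in>X. T x) \<le> (\<Sum>x\<in>X. card (T x))" by (rule card_UN_le[OF fin])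
  also have "\<dots> \<le> card X * (p - m)" using sum_bounded_above[of X "\<lambda>x. card (T x)" "p-m"] cardT by simp
  finally have "card (\<Union>x\<in>X. T x) < card {..<p}" using small by simp
  have "\<not> {..<p} \<subseteq> (\<Union>x\<in>X. T x)"
  proof
    assume "{..<p} \<subseteq> (\<Union>x\<in>X. T x)"
    moreover have "finite (\<Union>x\<in>X. T x)" using fin by (auto simp: T_def)
    ultimately have "card {..<p} \<le> card (\<Union>x\<in>X. T x)" by (rule card_mono[rotated])
    then show False using \<open>card (\<Union>x\<in>X. T x) < card {..<p}\<close> by simp
  qed
  then obtain t where "t < p" "t \<notin> (\<Union>x\<in>X. T x)" by auto
  then show ?thesis by (auto simp: T_def not_le)
qed

lemma finite_V: "finite (Gkn_V k n)"
proof -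
  have "Gkn_V k n \<subseteq> {..n} \<times> {..2*k}" by (auto simp: Gkn_V_def)
  then show ?thesis by (rule finite_subset) simp
qed

lemma E_sub: assumes "k \<ge> 2" shows "Gkn_E k n \<subseteq> Pow (Gkn_V k n)"
proof -
  have k0: "0 < 2*k - 1" "1 < 2*k - 1" using assms by auto
  have ef: "end_f i \<in> Gkn_V k n" if "i \<le> n" for i
    using that k0 V_in[of i n 0 k] V0_in[of k n] by (cases "i = 0") (auto simp: end_f_def)
  have ef': "end_f' n (i+1) \<in> Gkn_V k n" if "i \<le> n" for i
    using that k0 V_in[of "i+1" n 1 k] V0_in[of k n] by (cases "i = n") (auto simp: end_f'_def)
  show ?thesis
  proof
    fix e assume "e \<in> Gkn_E k n"
    then consider (b) i j l where "e = {(i,j),(i,k+l)}" "1 \<le> i" "i \<le> n" "j < k" "l < k-1"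
      | (x) i where "e = {end_f i, end_f' n (i+1)}" "i \<le> n"
      unfolding Gkn_E_def by blast
    then show "e \<in> Pow (Gkn_V k n)"
    proof cases
      case b
      then show ?thesis using V_in[of i n j k] V_in[of i n "k+l" k] by simp
    next
      case x
      then show ?thesis using ef ef' by simp
    qed
  qed
qed

lemma finite_E: assumes "k \<ge> 2" shows "finite (Gkn_E k n)"
  using E_sub[OF assms] finite_V by (meson finite_Pow_iff finite_subset)

lemma finite_el: assumes "k \<ge> 2" shows "finite (elements (Gkn_V k n) (Gkn_E k n))"
  using finite_V finite_E[OF assms] by (simp add: elements_def)

lemma card_el: assumes "k \<ge> 2" "n \<ge> 1" shows "card (elements (Gkn_V k n) (Gkn_E k n)) \<ge> 2"
proof -
  have "{Inl (0,0), Inr {end_f 0, end_f' n 1}} \<subseteq> elements (Gkn_V k n) (Gkn_E k n)"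
    using V0_in ext_in[of 0 n k] by simp
  from card_mono[OF finite_el[OF assms(1)] this] show ?thesis by simp
qed

lemma div_eq_close:
  fixes a b q :: nat
  assumes "a div q = b div q" "q > 0"
  shows "a < b + q \<and> b < a + q"
proof -
  have "q * (a div q) \<le> a" "a < q * (a div q) + q"
    using mod_less_divisor[OF assms(2), of a] mult_div_mod_eq[of q a] by linarith+
  moreover have "q * (b div q) \<le> b" "b < q * (b div q) + q"
    using mod_less_divisor[OF assms(2), of b] mult_div_mod_eq[of q b] by linarith+
  ultimately show ?thesis unfolding assms(1) by linarith
qed

lemma mod_two: fixes a p :: nat assumes "a < p + p" shows "a mod p = (if a < p then a else a - p)"
proof (cases "a < p")
  case False
  then have "a mod p = (a - p) mod p" by (simp add: le_mod_geq)
  also have "\<dots> = a - p" using assms False by simp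
  finally show ?thesis using False by simp
qed simp

lemma close_contra_int:
  fixes d e p q :: int
  assumes "d = e \<or> d = e + p \<or> d = e - p" "\<bar>e\<bar> < q" "q \<le> \<bar>d\<bar>" "\<bar>d\<bar> \<le> p - q"
  shows False
proof -
  have e: "e < q" "-e < q" using assms(2) by (auto simp: abs_less_iff)
  have d1: "d \<le> p - q" "-d \<le> p - q" using assms(4) by (auto simp: abs_le_iff)
  show False
  proof (cases "0 \<le> d")
    case True
    then have "q \<le> d" using assms(3) by simp
    then show False using assms(1) e d1 by linarith
  next
    case False
    then have "q \<le> -d" using assms(3) by simp
    then show False using assms(1) e d1 by linarith
  qed
qed

lemma close_contra:
  fixes a b cx cy t p q :: nat
  assumes "a < b + q" "b < a + q"
    "a = (if cx + t < p then cx + t else cx + t - p)"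
    "b = (if cy + t < p then cy + t else cy + t - p)"
    "q \<le> \<bar>int cx - int cy\<bar>" "\<bar>int cx - int cy\<bar> \<le> int p - int q"
    "cx < p" "cy < p" "t < p"
  shows False
proof (rule close_contra_int[of "int cx - int cy" "int a - int b" "int p" "int q"])
  show "\<bar>int a - int b\<bar> < int q" using assms(1,2) by (simp add: abs_less_iff)
  have "int a = int cx + int t \<or> int a = int cx + int t - int p" using assms(3) by (auto split: if_splits)
  moreover have "int b = int cy + int t \<or> int b = int cy + int t - int p" using assms(4) by (auto split: if_splits)
  ultimately show "int cx - int cy = int a - int b \<or> int cx - int cy = int a - int b + int p \<or> int cx - int cy = int a - int b - int p"
    by linarith
qed (use assms in auto)

lemma part2_ineq:
  assumes k2: "k \<ge> 2" and n1: "n \<ge> 1" and q1: "1 \<le> q"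
    and pq: "pq_total_colouring (Gkn_V k n) (Gkn_E k n) p q c"
  shows "(k+1)*q < p \<and> p \<le> card (elements (Gkn_V k n) (Gkn_E k n)) * (p - (k+1)*q)"
proof (rule ccontr)
  let ?V = "Gkn_V k n" and ?E = "Gkn_E k n"
  let ?X = "elements ?V ?E" and ?m = "(k+1)*q"
  assume neg: "\<not> ?thesis"
  have lt: "\<forall>x\<in>?X. c x < p" and cf: "\<forall>x\<in>?X. \<forall>y\<in>?X. conflict ?V ?E x y \<longrightarrow>
        q \<le> \<bar>int (c x) - int (c y)\<bar> \<and> \<bar>int (c x) - int (c y)\<bar> \<le> int p - int q"
    using pq unfolding pq_total_colouring_def by blast+
  obtain t where tp: "t < p" and tm: "\<forall>x\<in>?X. (c x + t) mod p < ?m"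
  proof (cases "?m < p")
    case True
    then have "card ?X * (p - ?m) < p" using neg by auto
    then show ?thesis using shift_exists[OF finite_el[OF k2], where m="?m" and p=p and c=c] True that by auto
  next
    case False
    have "Inl (0,0) \<in> ?X" using V0_in by simp
    then have "c (Inl (0,0)) < p" using lt by blast
    then have p0: "0 < p" by simp
    show ?thesis by (rule that[of 0]) (use p0 lt False in auto)
  qed
  define c' where "c' x = ((c x + t) mod p) div q" for x
  have "total_colouring ?V ?E (k+1) c'"
    unfolding total_colouring_def
  proof (intro conjI ballI impI)
    fix x assume "x \<in> ?X"
    then have "(c x + t) mod p < (k+1) * q" using tm by blast
    then show "c' x < k+1" unfolding c'_def using q1 by (simp add: div_less_iff_less_mult mult.commute)
  next
    fix x y assume x: "x \<in> ?X" and y: "y \<in> ?X" and con: "conflict ?V ?E x y"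
    have d: "q \<le> \<bar>int (c x) - int (c y)\<bar>" "\<bar>int (c x) - int (c y)\<bar> \<le> int p - int q"
      using cf x y con by blast+
    have cx: "c x < p" and cy: "c y < p" using lt x y by auto
    show "c' x \<noteq> c' y"
    proof
      assume "c' x = c' y"
      then have cl: "(c x + t) mod p < (c y + t) mod p + q" "(c y + t) mod p < (c x + t) mod p + q"
        using div_eq_close[of "(c x + t) mod p" q "(c y + t) mod p"] q1 unfolding c'_def by auto
      have ax: "(c x + t) mod p = (if c x + t < p then c x + t else c x + t - p)"
        using cx tp by (intro mod_two) simp
      have ay: "(c y + t) mod p = (if c y + t < p then c y + t else c y + t - p)"
        using cy tp by (intro mod_two) simp
      show False using close_contra[OF cl ax ay d cx cy tp] .
    qed
  qed
  then have "\<exists>c. total_colouring ?V ?E (k+1) c" by (rule exI[of _ c'])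
  then show False using part1[OF k2 n1] by simp
qed


definition okf :: "nat \<Rightarrow> nat \<Rightarrow> int \<Rightarrow> int \<Rightarrow> bool" where
  "okf p q x y \<longleftrightarrow> int q \<le> \<bar>x mod int p - y mod int p\<bar> \<and> \<bar>x mod int p - y mod int p\<bar> \<le> int p - int q"

lemma okf_sym: "okf p q x y \<Longrightarrow> okf p q y x"
  unfolding okf_def by (simp add: abs_minus_commute)

definition decode :: "nat \<Rightarrow> nat \<Rightarrow> (nat \<Rightarrow> nat \<Rightarrow> nat \<Rightarrow> int) \<Rightarrow> (nat \<Rightarrow> int) \<Rightarrow> (nat \<times> nat) set \<Rightarrow> int" where
  "decode k n peb pex e =
    (if k \<le> Max (snd ` e) then peb (Min (fst ` e)) (Min (snd ` e)) (Max (snd ` e) - k)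
     else if Max (snd ` e) = 0 then pex n else pex (Min (fst ` e)))"

lemma decode_b: "j < k \<Longrightarrow> decode k n peb pex {(i,j),(i,k+l)} = peb i j l"
  by (simp add: decode_def)

lemma decode_x: assumes "k \<ge> 2" "n \<ge> 1" "i \<le> n"
  shows "decode k n peb pex {end_f i, end_f' n (i+1)} = pex i"
proof (cases "i = n")
  case True
  then have "{end_f i, end_f' n (i+1)} = {(n,0),(0,0)}" using assms by (simp add: end_f_def end_f'_def)
  then show ?thesis using assms True by (simp add: decode_def)
next
  case False
  then have "{end_f i, end_f' n (i+1)} = {(i,0),(i+1,1)}" using assms by (simp add: end_f_def end_f'_def)
  then show ?thesis using assms False by (simp add: decode_def)
qed

definition colpos where
  "colpos k n pv peb pex z = (case z of Inl v \<Rightarrow> pv v | Inr e \<Rightarrow> decode k n peb pex e)"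

lemma E_cases:
  assumes "e \<in> Gkn_E k n"
  obtains (b) i j l where "e = {(i,j),(i,k+l)}" "1 \<le> i" "i \<le> n" "j < k" "l < k-1"
    | (x) i where "e = {end_f i, end_f' n (i+1)}" "i \<le> n"
  using assms unfolding Gkn_E_def by blast

lemma end_f_eq: "end_f i = end_f i' \<Longrightarrow> i = i'"
  by (auto simp: end_f_def split: if_splits)
lemma end_f'_eq: "i \<le> n \<Longrightarrow> i' \<le> n \<Longrightarrow> end_f' n (i+1) = end_f' n (i'+1) \<Longrightarrow> i = i'"
  by (auto simp: end_f'_def split: if_splits)
lemma end_ff': "i' \<le> n \<Longrightarrow> end_f i = end_f' n (i'+1) \<Longrightarrow> i = 0 \<and> i' = n"
  by (auto simp: end_f_def end_f'_def split: if_splits)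
lemma end_f_snd: "snd (end_f i) = 0" by (simp add: end_f_def)
lemma end_f'_snd: "snd (end_f' n i) \<le> 1" by (simp add: end_f'_def)

lemma generic:
  fixes pv :: "nat \<times> nat \<Rightarrow> int" and peb :: "nat \<Rightarrow> nat \<Rightarrow> nat \<Rightarrow> int" and pex :: "nat \<Rightarrow> int"
  assumes k2: "k \<ge> 2" and n1: "n \<ge> 1" and p0: "p > 0"
    and A1: "\<And>i j l. 1 \<le> i \<Longrightarrow> i \<le> n \<Longrightarrow> j < k \<Longrightarrow> l < k-1 \<Longrightarrow> okf p q (pv (i,j)) (pv (i,k+l))"
    and A2: "\<And>i. i \<le> n \<Longrightarrow> okf p q (pv (end_f i)) (pv (end_f' n (i+1)))"
    and B1a: "\<And>i j l. 1 \<le> i \<Longrightarrow> i \<le> n \<Longrightarrow> j < k \<Longrightarrow> l < k-1 \<Longrightarrow> okf p q (pv (i,j)) (peb i j l)"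
    and B1b: "\<And>i j l. 1 \<le> i \<Longrightarrow> i \<le> n \<Longrightarrow> j < k \<Longrightarrow> l < k-1 \<Longrightarrow> okf p q (pv (i,k+l)) (peb i j l)"
    and B2a: "\<And>i. i \<le> n \<Longrightarrow> okf p q (pv (end_f i)) (pex i)"
    and B2b: "\<And>i. i \<le> n \<Longrightarrow> okf p q (pv (end_f' n (i+1))) (pex i)"
    and C1a: "\<And>i j l l'. 1 \<le> i \<Longrightarrow> i \<le> n \<Longrightarrow> j < k \<Longrightarrow> l < k-1 \<Longrightarrow> l' < k-1 \<Longrightarrow> l \<noteq> l'
               \<Longrightarrow> okf p q (peb i j l) (peb i j l')"
    and C1b: "\<And>i j j' l. 1 \<le> i \<Longrightarrow> i \<le> n \<Longrightarrow> j < k \<Longrightarrow> j' < k \<Longrightarrow> l < k-1 \<Longrightarrow> j \<noteq> j'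
               \<Longrightarrow> okf p q (peb i j l) (peb i j' l)"
    and C2a: "\<And>i l. 1 \<le> i \<Longrightarrow> i \<le> n \<Longrightarrow> l < k-1 \<Longrightarrow> okf p q (peb i 0 l) (pex i)"
    and C2b: "\<And>i l. i + 1 \<le> n \<Longrightarrow> l < k-1 \<Longrightarrow> okf p q (peb (i+1) 1 l) (pex i)"
    and C3: "okf p q (pex 0) (pex n)"
  shows "pq_total_colouring (Gkn_V k n) (Gkn_E k n) p q (\<lambda>z. nat (colpos k n pv peb pex z mod int p))"
proof -
  let ?V = "Gkn_V k n" and ?E = "Gkn_E k n"
  let ?cp = "colpos k n pv peb pex"
  have key: "okf p q (?cp x) (?cp y)" if x: "x \<in> elements ?V ?E" and y: "y \<in> elements ?V ?E"
    and con: "conflict ?V ?E x y" for x y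
  proof (cases x)
    case (Inl u)
    note xu = Inl
    show ?thesis
    proof (cases y)
      case (Inl v)
      then have ein: "{u,v} \<in> ?E" using con xu by simp
      show ?thesis using ein
      proof (cases rule: E_cases)
        case (b i j l)
        then have "(u = (i,j) \<and> v = (i,k+l)) \<or> (u = (i,k+l) \<and> v = (i,j))" by (auto simp: doubleton_eq_iff)
        then show ?thesis using A1[OF b(2-5)] okf_sym xu Inl by (auto simp: colpos_def)
      next
        case (x i)
        then have "(u = end_f i \<and> v = end_f' n (i+1)) \<or> (u = end_f' n (i+1) \<and> v = end_f i)" by (auto simp: doubleton_eq_iff)
        then show ?thesis using A2[OF x(2)] okf_sym xu Inl by (auto simp: colpos_def)
      qed
    next
      case (Inr e)
      then have ein: "e \<in> ?E" and ue: "u \<in> e" using con xu by auto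
      show ?thesis using ein
      proof (cases rule: E_cases)
        case (b i j l)
        then have "u = (i,j) \<or> u = (i,k+l)" using ue by auto
        then show ?thesis using B1a[OF b(2-5)] B1b[OF b(2-5)] xu Inr b(1,4) by (auto simp: colpos_def decode_b)
      next
        case (x i)
        then have "u = end_f i \<or> u = end_f' n (i+1)" using ue by auto
        then show ?thesis using B2a[OF x(2)] B2b[OF x(2)] xu Inr x decode_x[OF k2 n1 x(2)] by (auto simp: colpos_def)
      qed
    qed
  next
    case (Inr e)
    note xe = Inr
    show ?thesis
    proof (cases y)
      case (Inl u)
      then have ein: "e \<in> ?E" and ue: "u \<in> e" using con xe by auto
      have "okf p q (?cp y) (?cp x)" using ein
      proof (cases rule: E_cases)
        case (b i j l)
        then have "u = (i,j) \<or> u = (i,k+l)" using ue by auto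
        then show ?thesis using B1a[OF b(2-5)] B1b[OF b(2-5)] xe Inl b(1,4) by (auto simp: colpos_def decode_b)
      next
        case (x i)
        then have "u = end_f i \<or> u = end_f' n (i+1)" using ue by auto
        then show ?thesis using B2a[OF x(2)] B2b[OF x(2)] xe Inl x decode_x[OF k2 n1 x(2)] by (auto simp: colpos_def)
      qed
      then show ?thesis by (rule okf_sym)
    next
      case (Inr f)
      then have ein: "e \<in> ?E" and fin: "f \<in> ?E" and ne: "e \<noteq> f" and int: "e \<inter> f \<noteq> {}"
        using con xe by auto
      obtain v where ve: "v \<in> e" and vf: "v \<in> f" using int by blast
      have xs: "?cp x = decode k n peb pex e" and ys: "?cp y = decode k n peb pex f"
        using xe Inr by (simp_all add: colpos_def)
      have "okf p q (decode k n peb pex e) (decode k n peb pex f)" using ein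
      proof (cases rule: E_cases)
        case eb: (b i j l)
        show "okf p q (decode k n peb pex e) (decode k n peb pex f)" using fin
        proof (cases rule: E_cases)
          case fb: (b i' j' l')
          have v1: "v = (i,j) \<or> v = (i,k+l)" using ve eb by auto
          have v2: "v = (i',j') \<or> v = (i',k+l')" using vf fb by auto
          have "(i = i' \<and> j = j' \<and> l \<noteq> l') \<or> (i = i' \<and> l = l' \<and> j \<noteq> j')"
            using v1 v2 eb fb ne by auto
          then show ?thesis
          proof
            assume h: "i = i' \<and> j = j' \<and> l \<noteq> l'"
            then show ?thesis using C1a[OF eb(2-5) fb(5)] eb fb by (simp add: decode_b)
          next
            assume h: "i = i' \<and> l = l' \<and> j \<noteq> j'"
            then show ?thesis using C1b[OF eb(2-4) fb(4) eb(5)] eb fb by (simp add: decode_b)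
          qed
        next
          case fx: (x i')
          have v1: "v = (i,j) \<or> v = (i,k+l)" using ve eb by auto
          have v2: "v = end_f i' \<or> v = end_f' n (i'+1)" using vf fx by auto
          have nb: "v \<noteq> (i,k+l)"
          proof
            assume "v = (i,k+l)"
            then have "snd v \<ge> 2" using k2 by simp
            moreover have "snd v \<le> 1" using v2 end_f_snd[of i'] end_f'_snd[of n "i'+1"] by auto
            ultimately show False by simp
          qed
          have "(i' = i \<and> j = 0) \<or> (i = i'+1 \<and> j = 1)"
            using v1 v2 nb eb(2) eb(3) fx(2) by (auto simp: end_f_def end_f'_def split: if_splits)
          then show ?thesis
          proof
            assume h: "i' = i \<and> j = 0"
            then show ?thesis using C2a[OF eb(2,3,5)] eb fx decode_x[OF k2 n1 fx(2)] by (simp add: decode_b)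
          next
            assume h: "i = i'+1 \<and> j = 1"
            then show ?thesis using C2b[of i' l] eb fx decode_x[OF k2 n1 fx(2)] by (simp add: decode_b)
          qed
        qed
      next
        case ex: (x i)
        show "okf p q (decode k n peb pex e) (decode k n peb pex f)" using fin
        proof (cases rule: E_cases)
          case fb: (b i' j' l')
          have v1: "v = (i',j') \<or> v = (i',k+l')" using vf fb by auto
          have v2: "v = end_f i \<or> v = end_f' n (i+1)" using ve ex by auto
          have nb: "v \<noteq> (i',k+l')"
          proof
            assume "v = (i',k+l')"
            then have "snd v \<ge> 2" using k2 by simp
            moreover have "snd v \<le> 1" using v2 end_f_snd[of i] end_f'_snd[of n "i+1"] by auto
            ultimately show False by simp
          qed
          have "(i = i' \<and> j' = 0) \<or> (i' = i+1 \<and> j' = 1)"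
            using v1 v2 nb fb(2) fb(3) ex(2) by (auto simp: end_f_def end_f'_def split: if_splits)
          then have "okf p q (decode k n peb pex f) (decode k n peb pex e)"
          proof
            assume h: "i = i' \<and> j' = 0"
            then show ?thesis using C2a[OF fb(2,3,5)] fb ex decode_x[OF k2 n1 ex(2)] by (simp add: decode_b)
          next
            assume h: "i' = i+1 \<and> j' = 1"
            then show ?thesis using C2b[of i l'] fb ex decode_x[OF k2 n1 ex(2)] by (simp add: decode_b)
          qed
          then show ?thesis by (rule okf_sym)
        next
          case fx: (x i')
          have ii: "i \<noteq> i'" using ne ex fx by auto
          have v2: "v = end_f i \<or> v = end_f' n (i+1)" using ve ex by auto
          have v3: "v = end_f i' \<or> v = end_f' n (i'+1)" using vf fx by auto
          have "(i = 0 \<and> i' = n) \<or> (i = n \<and> i' = 0)"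
            using v2 v3 ii end_f_eq[of i i'] end_f'_eq[OF ex(2) fx(2)] end_ff'[OF fx(2), of i] end_ff'[OF ex(2), of i'] by metis
          then show ?thesis using C3 okf_sym ex fx decode_x[OF k2 n1 ex(2)] decode_x[OF k2 n1 fx(2)] by auto
        qed
      qed
      then show ?thesis using xs ys by simp
    qed
  qed
  show ?thesis
    unfolding pq_total_colouring_def
  proof (intro conjI ballI impI)
    fix x assume "x \<in> elements ?V ?E"
    show "nat (?cp x mod int p) < p" using p0 by (simp add: nat_less_iff)
  next
    fix x y assume x: "x \<in> elements ?V ?E" and y: "y \<in> elements ?V ?E" and c: "conflict ?V ?E x y"
    have "okf p q (?cp x) (?cp y)" by (rule key[OF x y c])
    moreover have "int (nat (?cp x mod int p)) = ?cp x mod int p" "int (nat (?cp y mod int p)) = ?cp y mod int p"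
      using p0 by simp_all
    ultimately show "int q \<le> \<bar>int (nat (?cp x mod int p)) - int (nat (?cp y mod int p))\<bar>"
      "\<bar>int (nat (?cp x mod int p)) - int (nat (?cp y mod int p))\<bar> \<le> int p - int q"
      unfolding okf_def by simp_all
  qed
qed


lemma okf_direct:
  assumes "0 \<le> x" "x < int p" "0 \<le> y" "y < int p" "int q \<le> \<bar>x - y\<bar>" "\<bar>x - y\<bar> \<le> int p - int q"
  shows "okf p q x y"
  using assms by (simp add: okf_def)

lemma gap_int:
  fixes a b n m :: int
  assumes "a < b" "b - a \<le> m" "0 \<le> n"
  shows "n \<le> b*n - a*n \<and> b*n - a*n \<le> m*n"
proof -
  have e: "b*n - a*n = (b-a)*n" by (simp add: algebra_simps)
  have "1*n \<le> (b-a)*n" using assms by (intro mult_right_mono) auto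
  moreover have "(b-a)*n \<le> m*n" using assms by (intro mult_right_mono) auto
  ultimately show ?thesis unfolding e by simp
qed

lemma slots_ok:
  fixes a b i n k :: nat
  assumes "a \<noteq> b" "1 \<le> a" "a \<le> k" "1 \<le> b" "b \<le> k" "i \<le> n"
  shows "okf ((k+1)*n+1) n (int (a*n+i)) (int (b*n+i))"
proof -
  have e: "(k+1)*n+1 = k*n + n + 1" by (simp add: algebra_simps)
  have lt: "a*n + i < (k+1)*n+1" "b*n+i < (k+1)*n+1"
    using assms mult_le_mono1[of a k n] mult_le_mono1[of b k n] unfolding e by linarith+
  have d: "int n \<le> \<bar>int a * int n - int b * int n\<bar> \<and> \<bar>int a * int n - int b * int n\<bar> \<le> (int k - 1) * int n"
  proof (cases "a < b")
    case True
    then have "int a < int b" by simp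
    from gap_int[OF this, of "int k - 1" "int n"] assms show ?thesis by (simp add: abs_if)
  next
    case False
    then have "int b < int a" using assms by simp
    from gap_int[OF this, of "int k - 1" "int n"] assms show ?thesis by (simp add: abs_if)
  qed
  have "(int k - 1) * int n = int k * int n - int n" by (simp add: algebra_simps)
  moreover have "int (a*n+i) < int (k*n+n+1)" "int (b*n+i) < int (k*n+n+1)" unfolding of_nat_less_iff using lt unfolding e by simp_all
  ultimately show ?thesis using d unfolding e by (intro okf_direct) (auto simp: algebra_simps)
qed

lemma slot_vs:
  fixes a i n k d :: nat
  assumes "1 \<le> a" "a \<le> k" "i + d \<le> n" "d \<le> 1"
  shows "okf ((k+1)*n+1) n (int (a*n+i+d)) (int i)"
proof -
  have an: "n \<le> a*n" "a*n \<le> k*n" using assms by (simp_all add: mult_le_mono1)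
  have e: "(k+1)*n+1 = k*n + n + 1" by (simp add: algebra_simps)
  have lt: "a*n + i + d < (k+1)*n+1" using assms an unfolding e by linarith
  have ian: "int n \<le> int a * int n" "int a * int n \<le> int k * int n" using an by (metis of_nat_le_iff of_nat_mult)+
  show ?thesis using lt ian assms unfolding e by (intro okf_direct) auto
qed

definition sa :: "nat \<Rightarrow> nat \<Rightarrow> nat" where "sa k j = (if j = 0 then k else j)"
definition se :: "nat \<Rightarrow> nat \<Rightarrow> nat \<Rightarrow> nat" where "se k j l = (if j + l < k then j+l+1 else j+l+1-k)"

definition pv3 :: "nat \<Rightarrow> nat \<Rightarrow> nat \<times> nat \<Rightarrow> int" where
  "pv3 k n v = (if fst v = 0 then int (2*n+1) else if snd v < k then int (sa k (snd v) * n + fst v) else int (fst v))"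
definition peb3 :: "nat \<Rightarrow> nat \<Rightarrow> nat \<Rightarrow> nat \<Rightarrow> nat \<Rightarrow> int" where
  "peb3 k n i j l = int (se k j l * n + i)"
definition pex3 :: "nat \<Rightarrow> int" where "pex3 i = int i"

lemma sa_range: "j < k \<Longrightarrow> 1 \<le> sa k j \<and> sa k j \<le> k" by (auto simp: sa_def)
lemma se_range: "j < k \<Longrightarrow> l < k - 1 \<Longrightarrow> 1 \<le> se k j l \<and> se k j l \<le> k" by (auto simp: se_def)
lemma sa_se: "j < k \<Longrightarrow> l < k - 1 \<Longrightarrow> sa k j \<noteq> se k j l" by (auto simp: sa_def se_def)
lemma se_inj1: "j < k \<Longrightarrow> l < k - 1 \<Longrightarrow> l' < k - 1 \<Longrightarrow> l \<noteq> l' \<Longrightarrow> se k j l \<noteq> se k j l'"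
  by (auto simp: se_def)
lemma se_inj2: "j < k \<Longrightarrow> j' < k \<Longrightarrow> l < k - 1 \<Longrightarrow> j \<noteq> j' \<Longrightarrow> se k j l \<noteq> se k j' l"
  by (auto simp: se_def)

lemma colouring3:
  assumes k3: "k \<ge> 3" and n1: "n \<ge> 1"
  shows "pq_total_colouring (Gkn_V k n) (Gkn_E k n) ((k+1)*n+1) n
           (\<lambda>z. nat (colpos k n (pv3 k n) (peb3 k n) pex3 z mod int ((k+1)*n+1)))"
proof (rule generic)
  let ?p = "(k+1)*n+1"
  show "k \<ge> 2" "n \<ge> 1" "?p > 0" using assms by auto
  have "3*n \<le> k*n" using k3 by (simp add: mult_le_mono1)
  then have kn: "3 * int n \<le> int k * int n" by (metis of_nat_le_iff of_nat_mult of_nat_numeral)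
  have pe: "int ((k+1)*n+1) = int k * int n + int n + 1" by (simp add: algebra_simps)
  have s1: "sa k 1 = 1" "sa k 0 = k" using k3 by (simp_all add: sa_def)
  show "okf ?p n (pv3 k n (i,j)) (pv3 k n (i,k+l))" if "1 \<le> i" "i \<le> n" "j < k" "l < k-1" for i j l
  proof -
    have "okf ?p n (int (sa k j * n + i + 0)) (int i)" by (rule slot_vs) (use sa_range[of j k] that in auto)
    then show ?thesis using that by (simp add: pv3_def)
  qed
  show "okf ?p n (pv3 k n (end_f i)) (pv3 k n (end_f' n (i+1)))" if iN: "i \<le> n" for i
  proof -
    consider "i = 0" | "i = n" | "0 < i" "i < n" using iN by (metis le_neq_implies_less neq0_conv)
    then show ?thesis
    proof cases
      case 1
      then show ?thesis using n1 kn k3 s1 unfolding pe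
        by (auto intro!: okf_direct simp: pv3_def end_f_def end_f'_def; insert kn n1; linarith)
    next
      case 2
      then show ?thesis using n1 kn k3 s1 unfolding pe
        by (auto intro!: okf_direct simp: pv3_def end_f_def end_f'_def; insert kn n1; linarith)
    next
      case 3
      then show ?thesis using n1 kn k3 s1 unfolding pe
        by (auto intro!: okf_direct simp: pv3_def end_f_def end_f'_def; insert kn n1; linarith)
    qed
  qed
  show "okf ?p n (pv3 k n (i,j)) (peb3 k n i j l)" if "1 \<le> i" "i \<le> n" "j < k" "l < k-1" for i j l
  proof -
    have "okf ?p n (int (sa k j * n + i)) (int (se k j l * n + i))"
      by (rule slots_ok) (use sa_range[of j k] se_range[of j k l] sa_se[of j k l] that in auto)
    then show ?thesis using that by (simp add: pv3_def peb3_def)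
  qed
  show "okf ?p n (pv3 k n (i,k+l)) (peb3 k n i j l)" if "1 \<le> i" "i \<le> n" "j < k" "l < k-1" for i j l
  proof -
    have "okf ?p n (int (se k j l * n + i + 0)) (int i)" by (rule slot_vs) (use se_range[of j k l] that in auto)
    then show ?thesis using that okf_sym by (simp add: pv3_def peb3_def)
  qed
  show "okf ?p n (pv3 k n (end_f i)) (pex3 i)" if "i \<le> n" for i
    using that n1 kn k3 s1 unfolding pe
    by (cases "i = 0"; auto intro!: okf_direct simp: pv3_def pex3_def end_f_def; insert kn n1; linarith)
  show "okf ?p n (pv3 k n (end_f' n (i+1))) (pex3 i)" if "i \<le> n" for i
    using that n1 kn k3 s1 unfolding pe
    by (cases "i = n"; auto intro!: okf_direct simp: pv3_def pex3_def end_f'_def; insert kn n1; linarith)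
  show "okf ?p n (peb3 k n i j l) (peb3 k n i j l')"
    if "1 \<le> i" "i \<le> n" "j < k" "l < k-1" "l' < k-1" "l \<noteq> l'" for i j l l'
  proof -
    have "okf ?p n (int (se k j l * n + i)) (int (se k j l' * n + i))"
      by (rule slots_ok) (use se_range[of j k l] se_range[of j k l'] se_inj1[of j k l l'] that in auto)
    then show ?thesis by (simp add: peb3_def)
  qed
  show "okf ?p n (peb3 k n i j l) (peb3 k n i j' l)"
    if "1 \<le> i" "i \<le> n" "j < k" "j' < k" "l < k-1" "j \<noteq> j'" for i j j' l
  proof -
    have "okf ?p n (int (se k j l * n + i)) (int (se k j' l * n + i))"
      by (rule slots_ok) (use se_range[of j k l] se_range[of j' k l] se_inj2[of j k j' l] that in auto)
    then show ?thesis by (simp add: peb3_def)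
  qed
  show "okf ?p n (peb3 k n i 0 l) (pex3 i)" if "1 \<le> i" "i \<le> n" "l < k-1" for i l
  proof -
    have "okf ?p n (int (se k 0 l * n + i + 0)) (int i)" by (rule slot_vs) (use se_range[of 0 k l] that in auto)
    then show ?thesis by (simp add: peb3_def pex3_def)
  qed
  show "okf ?p n (peb3 k n (i+1) 1 l) (pex3 i)" if "i + 1 \<le> n" "l < k-1" for i l
  proof -
    have "okf ?p n (int (se k 1 l * n + i + 1)) (int i)" by (rule slot_vs) (use se_range[of 1 k l] that k3 in auto)
    then show ?thesis by (simp add: peb3_def pex3_def algebra_simps)
  qed
  show "okf ?p n (pex3 0) (pex3 n)"
    using n1 kn unfolding pe by (auto intro!: okf_direct simp: pex3_def algebra_simps; insert kn n1; linarith)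
qed


lemma okf_mod:
  fixes x y :: int
  assumes p0: "p > 0" and q0: "q > 0"
    and h: "(int q \<le> x - y \<and> x - y \<le> int p - int q) \<or> (int q \<le> x - y + int p \<and> x - y + int p \<le> int p - int q)"
  shows "okf p q x y"
proof -
  let ?P = "int p"
  obtain r where r: "int q \<le> r" "r \<le> ?P - int q" "(x - y) mod ?P = r"
  proof -
    consider (a) "int q \<le> x - y \<and> x - y \<le> ?P - int q" | (b) "int q \<le> x - y + ?P \<and> x - y + ?P \<le> ?P - int q"
      using h by blast
    then show ?thesis
    proof cases
      case a
      then have "(x - y) mod ?P = x - y" using q0 by (intro mod_pos_pos_trivial) auto
      then show ?thesis using that a by blast
    next
      case b
      then have "(x - y + ?P) mod ?P = x - y + ?P" using q0 by (intro mod_pos_pos_trivial) auto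
      then have "(x - y) mod ?P = x - y + ?P" by simp
      then show ?thesis using that b by blast
    qed
  qed
  define a where "a = x mod ?P"
  define b where "b = y mod ?P"
  have ab: "0 \<le> a" "a < ?P" "0 \<le> b" "b < ?P" using p0 by (simp_all add: a_def b_def)
  have m: "(a - b) mod ?P = r" unfolding a_def b_def using r(3) by (simp add: mod_diff_eq)
  have "a - b = r \<or> a - b = r - ?P"
  proof (cases "b \<le> a")
    case True
    then have "(a - b) mod ?P = a - b" using ab by (intro mod_pos_pos_trivial) auto
    then show ?thesis using m by simp
  next
    case False
    then have "(a - b + ?P) mod ?P = a - b + ?P" using ab by (intro mod_pos_pos_trivial) auto
    then have "(a - b) mod ?P = a - b + ?P" by simp
    then show ?thesis using m by simp
  qed
  then have "int q \<le> \<bar>a - b\<bar> \<and> \<bar>a - b\<bar> \<le> ?P - int q"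
  proof
    assume "a - b = r" then show ?thesis using r(1,2) q0 by simp
  next
    assume "a - b = r - ?P" then show ?thesis using r(1,2) q0 by simp
  qed
  then show ?thesis unfolding okf_def a_def[symmetric] b_def[symmetric] .
qed

definition pv2 :: "nat \<Rightarrow> nat \<times> nat \<Rightarrow> int" where
  "pv2 n v = (if fst v = 0 then 0 else if snd v = 0 then 2 * int (fst v)
     else if snd v = 1 then 2 * int (fst v) - 2 * int n - 2 else 2 * int (fst v) - int n - 1)"
definition peb2 :: "nat \<Rightarrow> nat \<Rightarrow> nat \<Rightarrow> nat \<Rightarrow> int" where
  "peb2 n i j l = (if j = 0 then 2 * int i - 2 * int n - 1 else 2 * int i - 1)"
definition pex2 :: "nat \<Rightarrow> nat \<Rightarrow> int" where
  "pex2 n i = 2 * int i - int n"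

lemma colouring2:
  assumes n1: "n \<ge> 1"
  shows "pq_total_colouring (Gkn_V 2 n) (Gkn_E 2 n) ((2+1)*n+1) n
           (\<lambda>z. nat (colpos 2 n (pv2 n) (peb2 n) (pex2 n) z mod int ((2+1)*n+1)))"
proof (rule generic)
  let ?p = "(2+1)*n+1"
  have pe: "int ?p = 3 * int n + 1" by simp
  show "(2::nat) \<ge> 2" "n \<ge> 1" "?p > 0" using assms by auto
  show "okf ?p n (pv2 n (i,j)) (pv2 n (i,2+l))" if "1 \<le> i" "i \<le> n" "j < 2" "l < 2-1" for i j l
    using that by (intro okf_mod) (auto simp: pv2_def less_2_cases_iff)
  show "okf ?p n (pv2 n (end_f i)) (pv2 n (end_f' n (i+1)))" if iN: "i \<le> n" for i
    using iN n1 by (intro okf_mod) (auto simp: pv2_def end_f_def end_f'_def)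
  show "okf ?p n (pv2 n (i,j)) (peb2 n i j l)" if "1 \<le> i" "i \<le> n" "j < 2" "l < 2-1" for i j l
    using that by (intro okf_mod) (auto simp: pv2_def peb2_def less_2_cases_iff)
  show "okf ?p n (pv2 n (i,2+l)) (peb2 n i j l)" if "1 \<le> i" "i \<le> n" "j < 2" "l < 2-1" for i j l
    using that by (intro okf_mod) (auto simp: pv2_def peb2_def less_2_cases_iff)
  show "okf ?p n (pv2 n (end_f i)) (pex2 n i)" if "i \<le> n" for i
    using that n1 by (intro okf_mod) (auto simp: pv2_def pex2_def end_f_def)
  show "okf ?p n (pv2 n (end_f' n (i+1))) (pex2 n i)" if "i \<le> n" for i
    using that n1 by (intro okf_mod) (auto simp: pv2_def pex2_def end_f'_def)
  show "okf ?p n (peb2 n i j l) (peb2 n i j l')"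
    if "1 \<le> i" "i \<le> n" "j < 2" "l < 2-1" "l' < 2-1" "l \<noteq> l'" for i j l l'
    using that by simp
  show "okf ?p n (peb2 n i j l) (peb2 n i j' l)"
    if "1 \<le> i" "i \<le> n" "j < 2" "j' < 2" "l < 2-1" "j \<noteq> j'" for i j j' l
    using that by (intro okf_mod) (auto simp: peb2_def less_2_cases_iff)
  show "okf ?p n (peb2 n i 0 l) (pex2 n i)" if "1 \<le> i" "i \<le> n" "l < 2-1" for i l
    using that by (intro okf_mod) (auto simp: peb2_def pex2_def)
  show "okf ?p n (peb2 n (i+1) 1 l) (pex2 n i)" if "i + 1 \<le> n" "l < 2-1" for i l
    using that by (intro okf_mod) (auto simp: peb2_def pex2_def)
  show "okf ?p n (pex2 n 0) (pex2 n n)"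
    using n1 by (intro okf_mod) (auto simp: pex2_def)
qed


lemma ratio_bound:
  fixes N p q k :: nat
  assumes N2: "N \<ge> 2" and q1: "q \<ge> 1" and lt: "(k+1)*q < p" and le: "p \<le> N * (p - (k+1)*q)"
  shows "real N * (real k + 1) / (real N - 1) \<le> real p / real q"
proof -
  have e1: "real (p - (k+1)*q) = real p - real ((k+1)*q)" using lt by (intro of_nat_diff) simp
  have e2: "real ((k+1)*q) = (real k + 1) * real q" by (simp add: algebra_simps)
  have "real p \<le> real N * real (p - (k+1)*q)" using le by (metis of_nat_le_iff of_nat_mult)
  then have "real p \<le> real N * (real p - (real k + 1) * real q)" unfolding e1 e2 .
  then have h: "real N * (real k + 1) * real q \<le> (real N - 1) * real p" by (simp add: algebra_simps)
  have N1: "real N - 1 > 0" using N2 by simp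
  have q0: "real q > 0" using q1 by simp
  have "real N * (real k + 1) / (real N - 1) = real N * (real k + 1) * real q / ((real N - 1) * real q)"
    using q0 by simp
  also have "\<dots> \<le> (real N - 1) * real p / ((real N - 1) * real q)"
    using h N1 q0 by (intro divide_right_mono) auto
  also have "\<dots> = real p / real q" using N1 by simp
  finally show ?thesis .
qed

theorem theorem4:
  fixes k n :: nat
  assumes "k \<ge> 2" and "n \<ge> 1"
  shows "\<not> (\<exists>c. total_colouring (Gkn_V k n) (Gkn_E k n) (k + 1) c)
     \<and> real k + 1 < circ_total_chromatic (Gkn_V k n) (Gkn_E k n)
     \<and> circ_total_chromatic (Gkn_V k n) (Gkn_E k n) \<le> real k + 1 + 1 / real n"
proof -
  let ?V = "Gkn_V k n" and ?E = "Gkn_E k n"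
  let ?S = "{real p / real q | p q. 1 \<le> q \<and> q \<le> p \<and> (\<exists>c. pq_total_colouring ?V ?E p q c)}"
  have k2: "k \<ge> 2" and n1: "n \<ge> 1" using assms by auto
  have ex: "\<exists>c. pq_total_colouring ?V ?E ((k+1)*n+1) n c"
  proof (cases "k = 2")
    case True
    then show ?thesis using colouring2[OF n1] by blast
  next
    case False
    then have "k \<ge> 3" using k2 by simp
    then show ?thesis using colouring3[OF _ n1] by blast
  qed
  have nle: "n \<le> (k+1)*n+1" by simp
  have mem: "real ((k+1)*n+1) / real n \<in> ?S" using ex n1 nle by blast
  have val: "real ((k+1)*n+1) / real n = real k + 1 + 1 / real n"
    using n1 by (simp add: field_simps)
  have bdd: "bdd_below ?S"
    by (rule bdd_belowI[of _ 0]) auto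
  have up: "circ_total_chromatic ?V ?E \<le> real k + 1 + 1 / real n"
    unfolding circ_total_chromatic_def using cInf_lower[OF mem bdd] val by simp
  define N where "N = card (elements ?V ?E)"
  have N2: "N \<ge> 2" unfolding N_def by (rule card_el[OF k2 n1])
  have lowall: "real N * (real k + 1) / (real N - 1) \<le> x" if "x \<in> ?S" for x
  proof -
    from that obtain p q c where x: "x = real p / real q" and q1: "1 \<le> q"
      and pq: "pq_total_colouring ?V ?E p q c" by blast
    from part2_ineq[OF k2 n1 q1 pq] have "(k+1)*q < p" "p \<le> N * (p - (k+1)*q)"
      unfolding N_def by auto
    from ratio_bound[OF N2 q1 this] show ?thesis unfolding x .
  qed
  have low: "real N * (real k + 1) / (real N - 1) \<le> circ_total_chromatic ?V ?E"
    unfolding circ_total_chromatic_def by (rule cInf_greatest) (use mem lowall in auto)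
  have "real k + 1 < real N * (real k + 1) / (real N - 1)"
  proof -
    have N1: "real N - 1 > 0" using N2 by simp
    have "(real k + 1) * (real N - 1) < real N * (real k + 1)" by (simp add: algebra_simps)
    then show ?thesis using N1 by (simp add: field_simps)
  qed
  then have "real k + 1 < circ_total_chromatic ?V ?E" using low by linarith
  then show ?thesis using part1[OF k2 n1] up by blast
qed


end
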